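(* For positive integers $k_1,\dots,k_l$ with $k_1\ge2$, \[ \begin{aligned} &\sum_{i=1}^l\sum_{j=0}^{k_i-2}\zeta_q^t(k_1,\dots,k_{i-1},k_i-j,j+1,k_{i+1},\dots,k_l)\\ &=\sum_{i=1}^l\{1+(k_i-2+\delta_{i,l})t\}\,\zeta_q^t(k_1,\dots,k_{i-1},k_i+1,k_{i+1},\dots,k_l) +t(t-1)\sum_{i=1}^{l-1}\zeta_q^t(k_1,\dots,k_{i-1},k_i+k_{i+1}+1,k_{i+2},\dots,k_l)\\ &\quad+(1-q)\Bigl\{\sum_{i=1}^l t(k_i-1)\,\zeta_q^t(k_1,\dots,k_l)+t(t-1)\sum_{i=1}^{l-1}\zeta_q^t(k_1,\dots,k_{i-1},k_i+k_{i+1},k_{i+2},\dots,k_l)\Bigr\}, \end{aligned} \] where $\delta_{i,l}$ is the Kronecker delta.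
   Context: Let $q$, $t$ be formal parameters and $[n]=\frac{1-q^n}{1-q}$. For positive integers $k_1,\dots,k_l$ with $k_1\ge 2$ put $\zeta_q(k_1,\dots,k_l)=\sum_{m_1>m_2>\cdots>m_l\ge1}\prod_{a=1}^l \frac{q^{(k_a-1)m_a}}{[m_a]^{k_a}}\in\mathbb{Q}[[q]]$. The weight of an index is the sum of its entries and its depth is the number of entries. Define $\zeta_q^t(k_1,\dots,k_l)=\sum'_{\mathbf p}(1-q)^{k-\mathrm{wt}(\mathbf p)}\zeta_q(\mathbf p)\,t^{l-\mathrm{dep}(\mathbf p)}\in\mathbb{Q}[[q]][t]$, where $k=k_1+\cdots+k_l$ and $\mathbf p$ runs over all indices of the form $(k_1\ \square\ k_2\ \square\cdots\square\ k_l)$ with each $\square$ filled by "," (comma), "$+$" or "$-1+$". An inner sum $\sum_{j=0}^{k_i-2}$ is empty when $k_i=1$. *)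

theory Defs
  imports "HOL-Computational_Algebra.Formal_Power_Series" "HOL-Computational_Algebra.Polynomial"
    "HOL-Analysis.Infinite_Sum"
begin

definition qint :: "nat \<Rightarrow> rat fps" where
  "qint n = (\<Sum>i<n. fps_X ^ i)"

definition zq_term :: "nat list \<Rightarrow> nat list \<Rightarrow> rat fps" where
  "zq_term ks ms = (\<Prod>a<length ks. fps_X ^ ((ks!a - 1) * ms!a) * inverse (qint (ms!a) ^ (ks!a)))"

definition zq_dom :: "nat \<Rightarrow> nat list set" where
  "zq_dom l = {ms. length ms = l \<and> sorted_wrt (>) ms \<and> (\<forall>m\<in>set ms. 1 \<le> m)}"

text \<open>zeta_q as an (unconditionally convergent, q-adic) infinite sum in Q[[q]].\<close>
definition zeta_q :: "nat list \<Rightarrow> rat fps" where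
  "zeta_q ks = infsum (zq_term ks) (zq_dom (length ks))"

datatype box = Comma | Plus | MinusPlus

text \<open>merge c ks os: the index (c box_1 k_1 box_2 k_2 ...) obtained by filling the boxes.\<close>
fun merge :: "nat \<Rightarrow> nat list \<Rightarrow> box list \<Rightarrow> nat list" where
  "merge c [] os = [c]"
| "merge c (k # ks) [] = [c]"
| "merge c (k # ks) (Comma # os) = c # merge k ks os"
| "merge c (k # ks) (Plus # os) = merge (c + k) ks os"
| "merge c (k # ks) (MinusPlus # os) = merge (c - 1 + k) ks os"

definition tvar :: "rat fps poly" where
  "tvar = [:0, 1:]"

definition zeta_qt :: "nat list \<Rightarrow> rat fps poly" where
  "zeta_qt ks =
    (\<Sum>os\<in>{os. length os = length ks - 1}.
       (let p = merge (hd ks) (tl ks) os in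
        [: (1 - fps_X) ^ (sum_list ks - sum_list p) * zeta_q p :]
          * tvar ^ (length ks - length p)))"

end

theory Submission
  imports Defs
begin
unbundle fps_syntax



definition aa :: "nat \<Rightarrow> rat fps" where "aa n = inverse (qint n)"
definition xx :: "nat \<Rightarrow> rat fps" where "xx n = fps_X ^ n * aa n"
definition ff :: "nat \<Rightarrow> nat \<Rightarrow> rat fps" where "ff k n = fps_X ^ ((k - 1) * n) * inverse (qint n ^ k)"
definition hh :: "rat fps" where "hh = 1 - fps_X"

lemma qint_0: "n \<ge> 1 \<Longrightarrow> qint n $ 0 = 1"
  by (cases n) (auto simp: qint_def fps_sum_nth)

lemma qint_aa: "n \<ge> 1 \<Longrightarrow> qint n * aa n = 1"
  unfolding aa_def by (rule inverse_mult_eq_1') (simp add: qint_0)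

lemma qint_Suc: "qint (Suc n) = qint n + fps_X ^ n"
  unfolding qint_def by simp

lemma qint_add: "qint (a + b) = qint a + fps_X ^ a * qint b"
  by (induction b) (simp_all add: qint_Suc algebra_simps power_add qint_def)

lemma qint_mult: "(1 - fps_X) * qint n = 1 - fps_X ^ n"
proof (induction n)
  case (Suc n)
  have "(1 - fps_X) * qint (Suc n) = (1 - fps_X) * qint n + (1 - fps_X) * fps_X ^ n"
    by (simp add: qint_Suc algebra_simps)
  also have "\<dots> = 1 - fps_X ^ Suc n" using Suc by (simp add: algebra_simps)
  finally show ?case .
qed (simp add: qint_def)

lemma aa_xx: "n \<ge> 1 \<Longrightarrow> aa n - xx n = hh"
proof -
  assume n: "n \<ge> 1"
  have "aa n - xx n = (1 - fps_X ^ n) * aa n" by (simp add: xx_def algebra_simps)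
  also have "\<dots> = (1 - fps_X) * (qint n * aa n)" by (simp add: qint_mult[symmetric] mult.assoc)
  finally show ?thesis using qint_aa[OF n] by (simp add: hh_def)
qed

lemma ff_eq: "k \<ge> 1 \<Longrightarrow> n \<ge> 1 \<Longrightarrow> ff k n = aa n * xx n ^ (k - 1)"
proof -
  assume k: "k \<ge> 1" and n: "n\<ge>1"
  obtain k' where k': "k = Suc k'" using k by (cases k) auto
  show ?thesis unfolding ff_def xx_def aa_def k' 
    by (simp add: fps_inverse_power fps_inverse_mult power_mult_distrib power_mult[symmetric] mult.commute mult.left_commute)
qed

lemma partial_frac:
  assumes "p \<ge> 1" "n > p"
  shows "aa n * xx (n - p) = aa p * (aa (n - p) - aa n)"
proof -
  have e: "qint n = qint (n - p) + fps_X ^ (n - p) * qint p"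
    using qint_add[of "n - p" p] assms by simp
  have u1: "qint n * aa n = 1" "qint p * aa p = 1" "qint (n-p) * aa (n-p) = 1"
    using assms by (auto intro!: qint_aa)
  have "aa p * (aa (n - p) - aa n) = aa p * aa (n-p) * aa n * (qint n - qint (n-p))"
    using u1 by (simp add: algebra_simps)
  also have "\<dots> = aa n * xx (n - p)" using u1 e
    by (simp add: xx_def algebra_simps)
  finally show ?thesis by simp
qed





lemma pc_mult: "[:a::'a::comm_ring_1:] * [:b:] = [:a * b:]" by simp
lemma pc_add: "[:a:] + [:b:] = [:a + b:]" by simp
lemma pc_diff: "[:a:] - [:b:] = [:a - b:]" by (simp add: diff_pCons)
lemma pc_pow: "[:a::'a::comm_ring_1:] ^ n = [:a ^ n:]" by (induction n) (auto simp: one_pCons)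
lemma pc_sum: "(\<Sum>i\<in>I. [:f i:]) = [:\<Sum>i\<in>I. f i:]"
  by (induction I rule: infinite_finite_induct) auto
lemma pc_of_nat: "(of_nat n :: 'a::comm_ring_1 poly) = [:of_nat n:]" by (simp add: of_nat_poly)

lemma ff_0: "k \<ge> 1 \<Longrightarrow> ff k 0 = 0"
  by (cases k) (simp_all add: ff_def qint_def)
lemma aa_0: "aa 0 = 0" by (simp add: aa_def qint_def)
lemma xx_0: "xx 0 = 0" by (simp add: xx_def aa_0)





lemma aa_eq: "n \<ge> 1 \<Longrightarrow> aa n = hh + xx n"
  using aa_xx[of n] by (simp add: diff_eq_eq)

lemma xx_diff: "p \<ge> 1 \<Longrightarrow> n \<ge> 1 \<Longrightarrow> xx p - xx n = aa p - aa n"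
  using aa_xx[of p] aa_xx[of n] by (simp add: algebra_simps)

lemma K_lemma:
  assumes "p \<ge> 1" "n > p"
  shows "(xx p - xx n) * (aa (n - p) - aa n) = aa n * xx n"
proof -
  have "(xx p - xx n) * (aa (n - p) - aa n) = (aa p - aa n) * (aa (n - p) - aa n)"
    using xx_diff[of p n] assms by simp
  also have "\<dots> = aa p * (aa (n - p) - aa n) - aa n * aa (n - p) + aa n * aa n"
    by (simp add: algebra_simps)
  also have "\<dots> = aa n * (xx (n - p) - aa (n - p) + aa n)"
    using partial_frac[OF assms] by (simp add: algebra_simps)
  also have "xx (n - p) - aa (n - p) = - hh" using aa_eq[of "n - p"] assms by simp
  also have "- hh + aa n = xx n" using aa_eq[of n] assms by simp
  finally show ?thesis .
qed

lemma G_lemma: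
  assumes "p \<ge> 1" "n > p"
  shows "(\<Sum>j<k. (aa n * xx n ^ (k - j)) * (aa p * xx p ^ j))
       = aa p * xx p ^ k * (aa (n - p) - aa n) - aa n * xx n ^ k * xx (n - p)"
proof (induction k)
  case 0
  then show ?case using partial_frac[OF assms] by simp
next
  case (Suc k)
  have s1: "(\<Sum>j<k. (aa n * xx n ^ (Suc k - j)) * (aa p * xx p ^ j))
      = xx n * (\<Sum>j<k. (aa n * xx n ^ (k - j)) * (aa p * xx p ^ j))"
    unfolding sum_distrib_left by (intro sum.cong) (auto simp: Suc_diff_le)
  have "(\<Sum>j<Suc k. (aa n * xx n ^ (Suc k - j)) * (aa p * xx p ^ j))
      = xx n * (\<Sum>j<k. (aa n * xx n ^ (k - j)) * (aa p * xx p ^ j)) + aa n * xx n * (aa p * xx p ^ k)"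
    using s1 by simp
  also have "\<dots> = xx n * (aa p * xx p ^ k * (aa (n - p) - aa n) - aa n * xx n ^ k * xx (n - p))
       + aa p * xx p ^ k * (aa n * xx n)"
    by (simp only: Suc.IH) (simp add: algebra_simps)
  also have "aa n * xx n = (xx p - xx n) * (aa (n - p) - aa n)" using K_lemma[OF assms] by simp
  also have "xx n * (aa p * xx p ^ k * (aa (n - p) - aa n) - aa n * xx n ^ k * xx (n - p))
       + aa p * xx p ^ k * ((xx p - xx n) * (aa (n - p) - aa n))
     = aa p * xx p ^ Suc k * (aa (n - p) - aa n) - aa n * xx n ^ Suc k * xx (n - p)"
    by (simp add: algebra_simps)
  finally show ?case .
qed

lemma ff_G:
  assumes "p \<ge> 1" "n > p" "k \<ge> 1"
  shows "(\<Sum>j<k - 1. ff (k - j) n * ff (Suc j) p) = ff k p * (aa (n - p) - aa n) - ff k n * xx (n - p)"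
proof -
  have "(\<Sum>j<k - 1. ff (k - j) n * ff (Suc j) p) = (\<Sum>j<k - 1. (aa n * xx n ^ (k - 1 - j)) * (aa p * xx p ^ j))"
    using assms by (intro sum.cong) (auto simp: ff_eq)
  also have "\<dots> = aa p * xx p ^ (k - 1) * (aa (n - p) - aa n) - aa n * xx n ^ (k - 1) * xx (n - p)"
    by (rule G_lemma[OF assms(1,2)])
  finally show ?thesis using assms by (simp add: ff_eq)
qed

lemma ff_diag:
  assumes "k \<ge> 1"
  shows "(\<Sum>j<k - 1. ff (k - j) n * ff (Suc j) n) = of_nat (k - 1) * aa n * ff k n"
proof (cases "n = 0")
  case True then show ?thesis using assms by (simp add: ff_0)
next
  case False
  then have "(\<Sum>j<k - 1. ff (k - j) n * ff (Suc j) n) = (\<Sum>j<k - 1. aa n * ff k n)"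
  proof (intro sum.cong refl)
    fix j assume j: "j \<in> {..<k - 1}"
    have e: "xx n ^ (k - Suc j) * xx n ^ j = xx n ^ (k - 1)"
      using j by (simp add: power_add[symmetric])
    have "ff (k - j) n * ff (Suc j) n = aa n * (aa n * (xx n ^ (k - Suc j) * xx n ^ j))"
      using assms j False by (simp add: ff_eq algebra_simps)
    then show "ff (k - j) n * ff (Suc j) n = aa n * ff k n"
      using assms False by (simp only: e) (simp add: ff_eq)
  qed
  then show ?thesis by simp
qed

lemma ff_Suc: "k \<ge> 1 \<Longrightarrow> ff (Suc k) n = xx n * ff k n"
proof (cases "n = 0")
  case False
  assume k: "k \<ge> 1"
  then obtain k' where k': "k = Suc k'" by (cases k) auto
  show ?thesis using False by (simp add: k' ff_eq algebra_simps)
qed (simp add: ff_0 xx_0)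

lemma aa_ff: "k \<ge> 1 \<Longrightarrow> aa n * ff k n = ff (Suc k) n + hh * ff k n"
proof (cases "n = 0")
  case False
  assume k: "k \<ge> 1"
  have "ff (Suc k) n + hh * ff k n = (xx n + hh) * ff k n" using ff_Suc[OF k] by (simp add: algebra_simps)
  also have "xx n + hh = aa n" using aa_eq[of n] False by simp
  finally show ?thesis by simp
qed (simp add: ff_0 aa_0)

lemma ff_merge: "a \<ge> 1 \<Longrightarrow> b \<ge> 1 \<Longrightarrow> xx n * ff a n * ff b n = ff (a + b + 1) n + hh * ff (a + b) n"
proof (cases "n = 0")
  case False
  assume ab: "a \<ge> 1" "b \<ge> 1"
  have "ff a n * ff b n = aa n * ff (a + b - 1) n" using ab False
    by (simp add: ff_eq power_add[symmetric] algebra_simps)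
  moreover have "ff (a + b) n = xx n * ff (a + b - 1) n" using ff_Suc[of "a + b - 1" n] ab by simp
  moreover have "ff (a + b + 1) n = xx n * ff (a + b) n" using ff_Suc[of "a + b" n] ab by simp
  moreover have "aa n = xx n + hh" using aa_eq[of n] False by simp
  ultimately show ?thesis by (simp add: algebra_simps)
qed (simp add: ff_0 xx_0)





type_synonym R = "rat fps poly"

definition cA :: "nat \<Rightarrow> R" where "cA n = [:aa n:]"
definition cX :: "nat \<Rightarrow> R" where "cX n = [:xx n:]"
definition cF :: "nat \<Rightarrow> nat \<Rightarrow> R" where "cF k n = [:ff k n:]"
definition cH :: R where "cH = [:hh:]"

definition Lop :: "(nat \<Rightarrow> R) \<Rightarrow> nat \<Rightarrow> R" where "Lop v n = (\<Sum>p\<in>{1..<n}. v p)"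
definition Wop :: "(nat \<Rightarrow> R) \<Rightarrow> nat \<Rightarrow> R" where "Wop v n = Lop v n + tvar * v n"
definition Xh :: "(nat \<Rightarrow> R) \<Rightarrow> nat \<Rightarrow> R" where "Xh v n = (\<Sum>p\<in>{1..<n}. cX (n - p) * v p)"
definition Dv :: "nat \<Rightarrow> R" where "Dv n = (\<Sum>d\<in>{1..n}. cX d)"

lemma cF_G:
  assumes "p \<ge> 1" "n > p" "k \<ge> 1"
  shows "(\<Sum>j<k - 1. cF (k - j) n * cF (Suc j) p) = cX (n - p) * cF k p - cF k n * cX (n - p) - cX n * cF k p"
proof -
  have "(\<Sum>j<k - 1. cF (k - j) n * cF (Suc j) p) = [:\<Sum>j<k - 1. ff (k - j) n * ff (Suc j) p:]"
    by (simp add: cF_def pc_sum mult.commute)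
  also have "\<dots> = [:ff k p * (xx (n - p) - xx n) - ff k n * xx (n - p):]"
    using ff_G[OF assms] xx_diff[of "n - p" n] assms by simp
  finally show ?thesis by (simp add: cF_def cX_def pc_diff algebra_simps)
qed

lemma cF_diag:
  assumes "k \<ge> 1"
  shows "(\<Sum>j<k - 1. cF (k - j) n * cF (Suc j) n) = of_nat (k - 1) * cA n * cF k n"
proof -
  have "(\<Sum>j<k - 1. cF (k - j) n * cF (Suc j) n) = [:\<Sum>j<k - 1. ff (k - j) n * ff (Suc j) n:]"
    by (simp add: cF_def pc_sum mult.commute)
  then show ?thesis using ff_diag[OF assms, of n] by (simp add: cF_def cA_def pc_of_nat)
qed

lemma L_local:
  assumes "k \<ge> 1"
  shows "(\<Sum>j<k - 1. cF (k - j) n * Wop (\<lambda>m. cF (Suc j) m * v m) n)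
    = Xh (\<lambda>m. cF k m * v m) n - cF k n * Xh v n - cX n * Lop (\<lambda>m. cF k m * v m) n
      + tvar * of_nat (k - 1) * cA n * cF k n * v n"
proof -
  have "(\<Sum>j<k - 1. cF (k - j) n * Wop (\<lambda>m. cF (Suc j) m * v m) n)
      = (\<Sum>j<k - 1. \<Sum>p\<in>{1..<n}. cF (k - j) n * cF (Suc j) p * v p)
        + tvar * (\<Sum>j<k - 1. cF (k - j) n * cF (Suc j) n) * v n"
    by (simp add: Wop_def Lop_def distrib_left sum.distrib sum_distrib_left sum_distrib_right algebra_simps)
  also have "(\<Sum>j<k - 1. \<Sum>p\<in>{1..<n}. cF (k - j) n * cF (Suc j) p * v p)
      = (\<Sum>p\<in>{1..<n}. (\<Sum>j<k - 1. cF (k - j) n * cF (Suc j) p) * v p)"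
    by (subst sum.swap) (simp add: sum_distrib_right)
  also have "\<dots> = (\<Sum>p\<in>{1..<n}. (cX (n - p) * cF k p - cF k n * cX (n - p) - cX n * cF k p) * v p)"
  proof (intro sum.cong refl)
    fix p assume "p \<in> {1..<n}"
    then show "(\<Sum>j<k - 1. cF (k - j) n * cF (Suc j) p) * v p = (cX (n - p) * cF k p - cF k n * cX (n - p) - cX n * cF k p) * v p"
      using cF_G[of p n k] assms by simp
  qed
  also have "\<dots> = Xh (\<lambda>m. cF k m * v m) n - cF k n * Xh v n - cX n * Lop (\<lambda>m. cF k m * v m) n"
    by (simp add: Xh_def Lop_def sum_distrib_left sum_subtractf sum.distrib algebra_simps)
  finally show ?thesis using cF_diag[OF assms, of n] by (simp add: algebra_simps)
qed





lemma cX_0: "cX 0 = 0" by (simp add: cX_def xx_0)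
lemma Dv_0: "Dv 0 = 0" by (simp add: Dv_def)
lemma Dv_Suc: "Dv (Suc n) = Dv n + cX (Suc n)" by (simp add: Dv_def)

lemma Lop_Suc: "Lop g (Suc n) = Lop g n + (if n = 0 then 0 else g n)"
  by (cases n) (auto simp: Lop_def)

lemma Lop_add: "Lop (\<lambda>m. f m + g m) n = Lop f n + Lop g n" by (simp add: Lop_def sum.distrib)
lemma Lop_diff: "Lop (\<lambda>m. f m - g m) n = Lop f n - Lop g n" by (simp add: Lop_def sum_subtractf)
lemma Lop_cmult: "Lop (\<lambda>m. c * f m) n = c * Lop f n" by (simp add: Lop_def sum_distrib_left)
lemma Lop_sum: "Lop (\<lambda>m. \<Sum>i\<in>I. f i m) n = (\<Sum>i\<in>I. Lop (f i) n)" by (simp add: Lop_def sum.swap[of _ I])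
lemma Lop_zero: "Lop (\<lambda>m. 0) n = 0" by (simp add: Lop_def)

lemma Wop_add: "Wop (\<lambda>m. f m + g m) n = Wop f n + Wop g n" by (simp add: Wop_def Lop_add algebra_simps)
lemma Wop_diff: "Wop (\<lambda>m. f m - g m) n = Wop f n - Wop g n" by (simp add: Wop_def Lop_diff algebra_simps)
lemma Wop_cmult: "Wop (\<lambda>m. c * f m) n = c * Wop f n" by (simp add: Wop_def Lop_cmult algebra_simps)
lemma Wop_sum: "Wop (\<lambda>m. \<Sum>i\<in>I. f i m) n = (\<Sum>i\<in>I. Wop (f i) n)"
  by (simp add: Wop_def Lop_sum sum.distrib sum_distrib_left)
lemma Wop_zero: "Wop (\<lambda>m. 0) n = 0" by (simp add: Wop_def Lop_zero)

lemma Xh_add: "Xh (\<lambda>m. f m + g m) n = Xh f n + Xh g n" by (simp add: Xh_def sum.distrib algebra_simps)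
lemma Xh_cmult: "Xh (\<lambda>m. c * f m) n = c * Xh f n" by (simp add: Xh_def sum_distrib_left algebra_simps)

lemma tri_swap:
  "(\<Sum>p\<in>{1..<n}. \<Sum>r\<in>{1..<p}. g p r) = (\<Sum>r\<in>{1..<n}. \<Sum>p\<in>{Suc r..<n}. g p r)"
proof (induction n)
  case (Suc n)
  show ?case
  proof (cases "n = 0")
    case True then show ?thesis by simp
  next
    case False
    have "(\<Sum>p\<in>{1..<Suc n}. \<Sum>r\<in>{1..<p}. g p r) = (\<Sum>p\<in>{1..<n}. \<Sum>r\<in>{1..<p}. g p r) + (\<Sum>r\<in>{1..<n}. g n r)"
      using False by simp
    also have "\<dots> = (\<Sum>r\<in>{1..<n}. (\<Sum>p\<in>{Suc r..<n}. g p r) + g n r)"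
      using Suc by (simp add: sum.distrib)
    also have "\<dots> = (\<Sum>r\<in>{1..<n}. \<Sum>p\<in>{Suc r..<Suc n}. g p r)"
      by (intro sum.cong refl) auto
    also have "\<dots> = (\<Sum>r\<in>{1..<Suc n}. \<Sum>p\<in>{Suc r..<Suc n}. g p r)"
      using False by simp
    finally show ?thesis .
  qed
qed simp

lemma Xh_Lop: "Xh (Lop v) n = Lop (Xh v) n"
proof -
  have "Xh (Lop v) n = (\<Sum>r\<in>{1..<n}. \<Sum>p\<in>{Suc r..<n}. cX (n - p) * v r)"
    unfolding Xh_def Lop_def sum_distrib_left by (rule tri_swap)
  also have "\<dots> = (\<Sum>r\<in>{1..<n}. \<Sum>p\<in>{Suc r..<n}. cX (p - r) * v r)"
  proof (rule sum.cong[OF refl])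
    fix r assume "r \<in> {1..<n}"
    show "(\<Sum>p\<in>{Suc r..<n}. cX (n - p) * v r) = (\<Sum>p\<in>{Suc r..<n}. cX (p - r) * v r)"
      by (rule sum.reindex_bij_witness[where i="\<lambda>p. n + r - p" and j="\<lambda>p. n + r - p"]) auto
  qed
  also have "\<dots> = Lop (Xh v) n"
    unfolding Xh_def Lop_def by (rule tri_swap[symmetric])
  finally show ?thesis .
qed

lemma Wop_fun: "Wop v = (\<lambda>m. Lop v m + tvar * v m)" by (simp add: fun_eq_iff Wop_def)

lemma Xh_Wop: "Xh (Wop v) n = Wop (Xh v) n"
  unfolding Wop_fun by (simp add: Xh_add Xh_cmult Xh_Lop)

lemma GAP: "Lop (\<lambda>m. cX m * Lop v m) n + Lop (\<lambda>m. Dv m * v m) n = (Dv n - cX n) * Lop v n"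
proof (induction n)
  case 0 then show ?case by (simp add: Lop_def)
next
  case (Suc n)
  show ?case
  proof (cases "n = 0")
    case True then show ?thesis by (simp add: Lop_def)
  next
    case False
    have "Lop (\<lambda>m. cX m * Lop v m) (Suc n) + Lop (\<lambda>m. Dv m * v m) (Suc n)
        = (Dv n - cX n) * Lop v n + cX n * Lop v n + Dv n * v n"
      using Suc False by (simp add: Lop_Suc algebra_simps)
    also have "\<dots> = (Dv (Suc n) - cX (Suc n)) * Lop v (Suc n)"
      using False by (simp add: Lop_Suc Dv_Suc algebra_simps)
    finally show ?thesis .
  qed
qed

lemma GAP_W: "Wop (\<lambda>m. cX m * Lop v m + Dv m * v m) n
   = Dv n * Wop v n - (1 - tvar) * cX n * Wop v n - tvar * (tvar - 1) * cX n * v n"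
proof -
  have "Wop (\<lambda>m. cX m * Lop v m + Dv m * v m) n
     = (Lop (\<lambda>m. cX m * Lop v m) n + Lop (\<lambda>m. Dv m * v m) n) + tvar * (cX n * Lop v n + Dv n * v n)"
    by (simp add: Wop_def Lop_add algebra_simps)
  also have "\<dots> = (Dv n - cX n) * Lop v n + tvar * (cX n * Lop v n + Dv n * v n)"
    by (simp only: GAP)
  finally show ?thesis by (simp add: Wop_def algebra_simps)
qed

lemma Xh_one: "Xh (\<lambda>m. 1) n = Dv n - cX n"
proof (cases n)
  case (Suc n')
  have "Xh (\<lambda>m. 1) n = (\<Sum>p\<in>{1..<n}. cX (n - p))" by (simp add: Xh_def)
  also have "\<dots> = (\<Sum>d\<in>{1..<n}. cX d)"
    by (rule sum.reindex_bij_witness[where i="\<lambda>p. n - p" and j="\<lambda>p. n - p"]) auto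
  also have "\<dots> = Dv n - cX n" using Suc by (simp add: Dv_Suc Dv_def atLeastLessThanSuc_atLeastAtMost)
  finally show ?thesis .
qed (simp add: Xh_def Dv_0 cX_0)

lemma top_error:
  "(\<Sum>n\<in>{1..M}. Xh U n - cX n * Lop U n - Dv n * U n) = - (\<Sum>p\<in>{1..M}. U p * (Dv M - Dv (M - p)))"
proof (induction M)
  case 0 then show ?case by simp
next
  case (Suc M)
  have "(\<Sum>n\<in>{1..Suc M}. Xh U n - cX n * Lop U n - Dv n * U n)
      = - (\<Sum>p\<in>{1..M}. U p * (Dv M - Dv (M - p))) + (Xh U (Suc M) - cX (Suc M) * Lop U (Suc M) - Dv (Suc M) * U (Suc M))"
    using Suc by simp
  also have "Xh U (Suc M) = (\<Sum>p\<in>{1..M}. cX (Suc M - p) * U p)"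
    by (simp add: Xh_def atLeastLessThanSuc_atLeastAtMost)
  also have "Lop U (Suc M) = (\<Sum>p\<in>{1..M}. U p)"
    by (simp add: Lop_def atLeastLessThanSuc_atLeastAtMost)
  also have "- (\<Sum>p\<in>{1..M}. U p * (Dv M - Dv (M - p))) + ((\<Sum>p\<in>{1..M}. cX (Suc M - p) * U p) - cX (Suc M) * (\<Sum>p\<in>{1..M}. U p) - Dv (Suc M) * U (Suc M))
      = - (\<Sum>p\<in>{1..M}. U p * (Dv M - Dv (M - p) + cX (Suc M) - cX (Suc M - p))) - Dv (Suc M) * U (Suc M)"
    by (simp add: sum_distrib_left sum.distrib sum_subtractf algebra_simps)
  also have "(\<Sum>p\<in>{1..M}. U p * (Dv M - Dv (M - p) + cX (Suc M) - cX (Suc M - p))) = (\<Sum>p\<in>{1..M}. U p * (Dv (Suc M) - Dv (Suc M - p)))"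
  proof (intro sum.cong refl)
    fix p assume "p \<in> {1..M}"
    then have "Suc M - p = Suc (M - p)" by auto
    then show "U p * (Dv M - Dv (M - p) + cX (Suc M) - cX (Suc M - p)) = U p * (Dv (Suc M) - Dv (Suc M - p))"
      by (simp add: Dv_Suc algebra_simps)
  qed
  also have "- (\<Sum>p\<in>{1..M}. U p * (Dv (Suc M) - Dv (Suc M - p))) - Dv (Suc M) * U (Suc M) = - (\<Sum>p\<in>{1..Suc M}. U p * (Dv (Suc M) - Dv (Suc M - p)))"
    by (simp add: Dv_0 algebra_simps)
  finally show ?case .
qed





fun Vv :: "nat list \<Rightarrow> nat \<Rightarrow> R" where
  "Vv [] = (\<lambda>n. 1)"
| "Vv (k # ks) = Wop (\<lambda>n. cF k n * Vv ks n)"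

definition Uv :: "nat list \<Rightarrow> nat \<Rightarrow> R" where "Uv ks = (\<lambda>n. cF (hd ks) n * Vv (tl ks) n)"

lemma Uv_cons: "Uv (k # ks) n = cF k n * Vv ks n" by (simp add: Uv_def)
lemma Vv_Uv: "ks \<noteq> [] \<Longrightarrow> Vv ks = Wop (Uv ks)"
  by (cases ks) (simp_all add: Uv_def)

definition bump :: "nat list \<Rightarrow> nat \<Rightarrow> nat list" where "bump ks i = ks[i := Suc (ks ! i)]"
definition ins :: "nat list \<Rightarrow> nat \<Rightarrow> nat \<Rightarrow> nat list" where
  "ins ks i j = take i ks @ [ks ! i - j, Suc j] @ drop (Suc i) ks"
definition mg :: "nat list \<Rightarrow> nat \<Rightarrow> nat \<Rightarrow> nat list" where
  "mg ks e i = take i ks @ [ks ! i + ks ! Suc i + e] @ drop (Suc (Suc i)) ks"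

definition UD :: "nat list \<Rightarrow> nat \<Rightarrow> R" where
  "UD ks = (\<lambda>n. \<Sum>i<length ks. \<Sum>j<ks ! i - 1. Uv (ins ks i j) n)"
definition URb :: "nat list \<Rightarrow> nat \<Rightarrow> nat \<Rightarrow> R" where
  "URb ks i = (\<lambda>n. tvar * of_nat (ks ! i - 1) * (Uv (bump ks i) n + cH * Uv ks n)
       + (1 - tvar + (if i = length ks - 1 then tvar else 0)) * Uv (bump ks i) n)"
definition URm :: "nat list \<Rightarrow> nat \<Rightarrow> nat \<Rightarrow> R" where
  "URm ks i = (\<lambda>n. Uv (mg ks 1 i) n + cH * Uv (mg ks 0 i) n)"
definition UR :: "nat list \<Rightarrow> nat \<Rightarrow> R" where
  "UR ks = (\<lambda>n. (\<Sum>i<length ks. URb ks i n) + tvar * (tvar - 1) * (\<Sum>i<length ks - 1. URm ks i n))"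

lemma ins_Suc: "ins (k # r) (Suc i) j = k # ins r i j" by (simp add: ins_def)
lemma ins_0: "ins (k # r) 0 j = (k - j) # Suc j # r" by (simp add: ins_def)
lemma bump_Suc: "bump (k # r) (Suc i) = k # bump r i" by (simp add: bump_def)
lemma bump_0: "bump (k # r) 0 = Suc k # r" by (simp add: bump_def)
lemma mg_Suc: "mg (k # r) e (Suc i) = k # mg r e i" by (simp add: mg_def)
lemma mg_0: "mg (k # k' # r) e 0 = (k + k' + e) # r" by (simp add: mg_def)

lemma ins_ne: "ins r i j \<noteq> []" by (simp add: ins_def)
lemma bump_ne: "r \<noteq> [] \<Longrightarrow> bump r i \<noteq> []" by (simp add: bump_def)
lemma mg_ne: "mg r e i \<noteq> []" by (simp add: mg_def)

lemma Uv_k_cons: "L \<noteq> [] \<Longrightarrow> Uv (k # L) n = cF k n * Wop (Uv L) n"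
  by (simp add: Uv_cons Vv_Uv)

lemma UD_cons: "UD (k # r) n = (\<Sum>j<k - 1. cF (k - j) n * Wop (\<lambda>m. cF (Suc j) m * Vv r m) n) + cF k n * Wop (UD r) n"
proof -
  have "UD (k # r) n = (\<Sum>j<k - 1. Uv (ins (k # r) 0 j) n) + (\<Sum>i<length r. \<Sum>j<r ! i - 1. Uv (ins (k # r) (Suc i) j) n)"
    unfolding UD_def length_Cons sum.lessThan_Suc_shift by simp
  also have "(\<Sum>j<k - 1. Uv (ins (k # r) 0 j) n) = (\<Sum>j<k - 1. cF (k - j) n * Wop (\<lambda>m. cF (Suc j) m * Vv r m) n)"
    by (simp add: ins_0 Uv_cons)
  also have "(\<Sum>i<length r. \<Sum>j<r ! i - 1. Uv (ins (k # r) (Suc i) j) n) = cF k n * Wop (UD r) n"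
    unfolding UD_def by (simp add: ins_Suc Uv_k_cons ins_ne Wop_sum sum_distrib_left)
  finally show ?thesis .
qed

lemma URb_Suc: "i < length r \<Longrightarrow> URb (k # r) (Suc i) n = cF k n * Wop (URb r i) n"
proof -
  assume i: "i < length r"
  then have ne: "r \<noteq> []" by auto
  define c where "c = (1 - tvar + (if i = length r - 1 then tvar else 0))"
  have c: "(1 - tvar + (if Suc i = length (k # r) - 1 then tvar else 0)) = c" using ne by (auto simp: c_def)
  have "URb (k # r) (Suc i) n = tvar * of_nat (r ! i - 1) * (Uv (k # bump r i) n + cH * Uv (k # r) n) + c * Uv (k # bump r i) n"
    unfolding URb_def c bump_Suc by simp
  also have "\<dots> = tvar * of_nat (r ! i - 1) * (cF k n * Wop (Uv (bump r i)) n + cH * (cF k n * Wop (Uv r) n)) + c * (cF k n * Wop (Uv (bump r i)) n)"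
    using ne by (simp add: Uv_k_cons bump_ne)
  also have "URb r i = (\<lambda>n. tvar * of_nat (r ! i - 1) * (Uv (bump r i) n + cH * Uv r n) + c * Uv (bump r i) n)"
    unfolding URb_def c_def ..
  then have "Wop (URb r i) n = tvar * of_nat (r ! i - 1) * (Wop (Uv (bump r i)) n + cH * Wop (Uv r) n) + c * Wop (Uv (bump r i)) n"
    by (simp add: Wop_add Wop_cmult)
  ultimately show ?thesis by (simp add: algebra_simps)
qed

lemma URm_Suc: "URm (k # r) (Suc i) n = cF k n * Wop (URm r i) n"
  unfolding URm_def by (simp add: mg_Suc Uv_k_cons mg_ne Wop_add Wop_cmult algebra_simps)

lemma UR_cons:
  assumes "r \<noteq> []"
  shows "UR (k # r) n = URb (k # r) 0 n + tvar * (tvar - 1) * URm (k # r) 0 n + cF k n * Wop (UR r) n"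
proof -
  obtain k' r' where r: "r = k' # r'" using assms by (cases r) auto
  have e1: "UR (k # r) n = (URb (k # r) 0 n + (\<Sum>i<length r. URb (k # r) (Suc i) n))
      + tvar * (tvar - 1) * (URm (k # r) 0 n + (\<Sum>i<length r - 1. URm (k # r) (Suc i) n))"
    unfolding UR_def using r by (simp only: length_Cons sum.lessThan_Suc_shift diff_Suc_1)
  have e2: "(\<Sum>i<length r. URb (k # r) (Suc i) n) = cF k n * Wop (\<lambda>m. \<Sum>i<length r. URb r i m) n"
    by (simp add: URb_Suc Wop_sum sum_distrib_left)
  have e3: "(\<Sum>i<length r - 1. URm (k # r) (Suc i) n) = cF k n * Wop (\<lambda>m. \<Sum>i<length r - 1. URm r i m) n"
    by (simp add: URm_Suc Wop_sum sum_distrib_left)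
  have e4: "Wop (UR r) n = Wop (\<lambda>m. \<Sum>i<length r. URb r i m) n + tvar * (tvar - 1) * Wop (\<lambda>m. \<Sum>i<length r - 1. URm r i m) n"
    unfolding UR_def by (simp add: Wop_add Wop_cmult)
  show ?thesis by (simp only: e1 e2 e3 e4) (simp add: algebra_simps)
qed





lemma cF_Suc: "k \<ge> 1 \<Longrightarrow> cF (Suc k) n = cX n * cF k n"
  by (simp add: cF_def cX_def ff_Suc)
lemma cA_cF: "k \<ge> 1 \<Longrightarrow> cA n * cF k n = cX n * cF k n + cH * cF k n"
proof -
  assume k: "k \<ge> 1"
  have "cA n * cF k n = [:aa n * ff k n:]" by (simp only: cA_def cF_def pc_mult)
  also have "\<dots> = [:xx n * ff k n + hh * ff k n:]" by (simp only: aa_ff[OF k] ff_Suc[OF k])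
  also have "\<dots> = cX n * cF k n + cH * cF k n" by (simp only: cX_def cF_def cH_def pc_mult pc_add)
  finally show ?thesis .
qed
lemma cF_merge: "a \<ge> 1 \<Longrightarrow> b \<ge> 1 \<Longrightarrow> cX n * cF a n * cF b n = cF (a + b + 1) n + cH * cF (a + b) n"
proof -
  assume ab: "a \<ge> 1" "b \<ge> 1"
  have "cX n * cF a n * cF b n = [:xx n * ff a n * ff b n:]" by (simp only: cX_def cF_def pc_mult)
  also have "\<dots> = [:ff (a + b + 1) n + hh * ff (a + b) n:]" by (simp only: ff_merge[OF ab])
  also have "\<dots> = cF (a + b + 1) n + cH * cF (a + b) n" by (simp only: cF_def cH_def pc_mult pc_add)
  finally show ?thesis .
qed

lemma L_local':
  assumes "k \<ge> 1"
  shows "(\<Sum>j<k - 1. cF (k - j) n * Wop (\<lambda>m. cF (Suc j) m * v m) n)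
    = Xh (\<lambda>m. cF k m * v m) n - cF k n * Xh v n - cX n * Lop (\<lambda>m. cF k m * v m) n
      + tvar * of_nat (k - 1) * (cX n * cF k n + cH * cF k n) * v n"
  using L_local[OF assms, of n v] cA_cF[OF assms, of n] by (simp add: mult.assoc)

lemma UD_nil: "UD [] = (\<lambda>n. 0)" by (simp add: UD_def)

lemma main_op:
  "ks \<noteq> [] \<Longrightarrow> \<forall>k\<in>set ks. k \<ge> 1 \<Longrightarrow>
   UD ks = (\<lambda>n. UR ks n + Xh (Uv ks) n - cX n * Lop (Uv ks) n - Dv n * Uv ks n)"
proof (induction ks)
  case Nil then show ?case by simp
next
  case (Cons k r)
  have k: "k \<ge> 1" using Cons.prems by simp
  show ?case
  proof (cases "r = []")
    case True
    show ?thesis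
    proof
      fix n
      have ud: "UD [k] n = (\<Sum>j<k - 1. cF (k - j) n * Wop (\<lambda>m. cF (Suc j) m * (\<lambda>m. 1) m) n)"
        using UD_cons[of k "[]" n] by (simp add: UD_nil Wop_zero)
      have loc: "\<dots> = Xh (\<lambda>m. cF k m * (\<lambda>m. 1) m) n - cF k n * Xh (\<lambda>m. 1) n - cX n * Lop (\<lambda>m. cF k m * (\<lambda>m. 1) m) n
      + tvar * of_nat (k - 1) * (cX n * cF k n + cH * cF k n) * (\<lambda>m. 1) n"
        by (rule L_local'[OF k])
      have u: "Uv [k] = (\<lambda>m. cF k m * (\<lambda>m. 1) m)" by (simp add: Uv_def)
      have ur: "UR [k] n = tvar * of_nat (k - 1) * (Uv [Suc k] n + cH * Uv [k] n) + Uv [Suc k] n"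
        by (simp add: UR_def URb_def bump_def)
      have u2: "Uv [Suc k] n = cX n * cF k n" using cF_Suc[OF k] by (simp add: Uv_def)
      show "UD (k # r) n = UR (k # r) n + Xh (Uv (k # r)) n - cX n * Lop (Uv (k # r)) n - Dv n * Uv (k # r) n"
        unfolding True ud loc ur u2 u Xh_one by (simp add: algebra_simps)
    qed
  next
    case False
    then obtain k' r' where r: "r = k' # r'" by (cases r) auto
    have k': "k' \<ge> 1" using Cons.prems r by simp
    have IH: "UD r = (\<lambda>n. UR r n + Xh (Uv r) n - (cX n * Lop (Uv r) n + Dv n * Uv r n))"
      using Cons.IH[OF False] Cons.prems by (simp add: algebra_simps)
    show ?thesis
    proof
      fix n
      have ud: "UD (k # r) n = (\<Sum>j<k - 1. cF (k - j) n * Wop (\<lambda>m. cF (Suc j) m * Vv r m) n) + cF k n * Wop (UD r) n"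
        by (rule UD_cons)
      have loc: "(\<Sum>j<k - 1. cF (k - j) n * Wop (\<lambda>m. cF (Suc j) m * Vv r m) n)
         = Xh (Uv (k # r)) n - cF k n * Xh (Vv r) n - cX n * Lop (Uv (k # r)) n + tvar * of_nat (k - 1) * (cX n * cF k n + cH * cF k n) * Vv r n"
        using L_local'[OF k, of n "Vv r"] by (simp add: Uv_def)
      have vv: "Wop (Uv r) = Vv r" using Vv_Uv[OF False] by simp
      have wud: "Wop (UD r) n = Wop (UR r) n + Xh (Vv r) n - (Dv n * Vv r n - (1 - tvar) * cX n * Vv r n - tvar * (tvar - 1) * cX n * Uv r n)"
      proof -
        have gw: "Wop (\<lambda>m. cX m * Lop (Uv r) m) n + Wop (\<lambda>m. Dv m * Uv r m) n
            = Dv n * Vv r n - (1 - tvar) * cX n * Vv r n - tvar * (tvar - 1) * cX n * Uv r n"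
          using GAP_W[of "Uv r" n] unfolding Wop_add vv .
        show ?thesis unfolding IH Wop_diff Wop_add Xh_Wop[symmetric] vv gw ..
      qed
      have urc: "UR (k # r) n = URb (k # r) 0 n + tvar * (tvar - 1) * URm (k # r) 0 n + cF k n * Wop (UR r) n"
        by (rule UR_cons[OF False])
      have urb: "URb (k # r) 0 n = tvar * of_nat (k - 1) * (cX n * cF k n * Vv r n + cH * (cF k n * Vv r n)) + (1 - tvar) * (cX n * cF k n * Vv r n)"
        unfolding URb_def bump_0 using r by (simp add: Uv_cons cF_Suc[OF k])
      have urm: "URm (k # r) 0 n = cX n * cF k n * cF k' n * Vv r' n"
        unfolding URm_def r mg_0 using cF_merge[OF k k', of n] by (simp add: Uv_cons algebra_simps)
      have u1: "Uv (k # r) n = cF k n * Vv r n" by (rule Uv_cons)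
      have u2: "Uv r n = cF k' n * Vv r' n" unfolding r by (rule Uv_cons)
      show "UD (k # r) n = UR (k # r) n + Xh (Uv (k # r)) n - cX n * Lop (Uv (k # r)) n - Dv n * Uv (k # r) n"
        unfolding ud loc wud urc urb urm u1 u2 by (simp add: algebra_simps)
    qed
  qed
qed





definition Sset :: "nat \<Rightarrow> nat \<Rightarrow> nat list set" where
  "Sset l m = {ms. length ms = l \<and> sorted_wrt (>) ms \<and> (\<forall>x\<in>set ms. 1 \<le> x \<and> x < m)}"

fun Zs :: "nat list \<Rightarrow> nat \<Rightarrow> rat fps" where
  "Zs [] m = 1"
| "Zs (k # ks) m = (\<Sum>n\<in>{1..<m}. ff k n * Zs ks n)"

lemma zq_term_cons: "zq_term (k # ks) (n # ms) = ff k n * zq_term ks ms"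
  unfolding zq_term_def ff_def length_Cons prod.lessThan_Suc_shift by simp

lemma Sset_finite: "finite (Sset l m)"
proof -
  have "Sset l m \<subseteq> {ms. set ms \<subseteq> {..<m} \<and> length ms = l}" by (auto simp: Sset_def)
  moreover have "finite {ms. set ms \<subseteq> {..<m} \<and> length ms = l}" by (rule finite_lists_length_eq) simp
  ultimately show ?thesis by (rule finite_subset)
qed

lemma Sset_0: "Sset 0 m = {[]}" by (auto simp: Sset_def)

lemma Sset_Suc: "Sset (Suc l) m = (\<Union>n\<in>{1..<m}. (\<lambda>ms. n # ms) ` Sset l n)"
proof (intro equalityI subsetI)
  fix ms assume "ms \<in> Sset (Suc l) m"
  then obtain n ms' where ms: "ms = n # ms'" by (cases ms) (auto simp: Sset_def)
  with \<open>ms \<in> Sset (Suc l) m\<close> have "n \<in> {1..<m}" "ms' \<in> Sset l n" by (auto simp: Sset_def)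
  then show "ms \<in> (\<Union>n\<in>{1..<m}. (\<lambda>ms. n # ms) ` Sset l n)" using ms by blast
next
  fix ms assume "ms \<in> (\<Union>n\<in>{1..<m}. (\<lambda>ms. n # ms) ` Sset l n)"
  then obtain n ms' where "n \<in> {1..<m}" "ms' \<in> Sset l n" "ms = n # ms'" by blast
  then show "ms \<in> Sset (Suc l) m" by (auto simp: Sset_def)
qed

lemma Sset_sum: "(\<Sum>ms\<in>Sset (length ks) m. zq_term ks ms) = Zs ks m"
proof (induction ks arbitrary: m)
  case Nil then show ?case by (simp add: Sset_0 zq_term_def)
next
  case (Cons k ks)
  have "(\<Sum>ms\<in>Sset (length (k # ks)) m. zq_term (k # ks) ms)
      = (\<Sum>n\<in>{1..<m}. \<Sum>ms\<in>(\<lambda>ms. n # ms) ` Sset (length ks) n. zq_term (k # ks) ms)"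
    unfolding length_Cons Sset_Suc
    by (rule sum.UNION_disjoint) (auto simp: Sset_finite)
  also have "\<dots> = (\<Sum>n\<in>{1..<m}. \<Sum>ms\<in>Sset (length ks) n. ff k n * zq_term ks ms)"
  proof (rule sum.cong[OF refl])
    fix n assume "n \<in> {1..<m}"
    show "(\<Sum>ms\<in>(\<lambda>ms. n # ms) ` Sset (length ks) n. zq_term (k # ks) ms) = (\<Sum>ms\<in>Sset (length ks) n. ff k n * zq_term ks ms)"
      by (subst sum.reindex) (auto simp: inj_on_def zq_term_cons)
  qed
  also have "\<dots> = Zs (k # ks) m" by (simp add: sum_distrib_left[symmetric] Cons.IH)
  finally show ?case .
qed

lemma Sset_dom: "Sset l m \<subseteq> zq_dom l" by (auto simp: Sset_def zq_dom_def)

lemma dom_not_Sset_head: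
  assumes "ms \<in> zq_dom l" "ms \<notin> Sset l m"
  shows "\<exists>n rest. ms = n # rest \<and> n \<ge> m"
proof -
  from assms obtain x where x: "x \<in> set ms" "x \<ge> m" by (auto simp: Sset_def zq_dom_def not_less)
  then obtain n rest where ms: "ms = n # rest" by (cases ms) auto
  have "x \<le> n" using x assms(1) ms by (auto simp: zq_dom_def)
  then show ?thesis using x ms by auto
qed

lemma zq_term_nth0:
  assumes "hd ks \<ge> 2" "ks \<noteq> []" "ms = n # rest" "n > i"
  shows "zq_term ks ms $ i = 0"
proof -
  obtain k ks' where ks: "ks = k # ks'" using assms by (cases ks) auto
  have "zq_term ks ms = fps_X ^ ((k - 1) * n) * (inverse (qint n ^ k) * zq_term ks' rest)"
    using assms ks by (simp add: zq_term_cons ff_def mult.assoc)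
  moreover have "(k - 1) * n > i"
  proof -
    have "k - 1 \<ge> 1" using assms ks by simp
    then have "(k - 1) * n \<ge> n" by simp
    then show ?thesis using assms by linarith
  qed
  ultimately show ?thesis by (simp add: fps_X_power_mult_nth)
qed

lemma sum_nth_eq:
  assumes "finite B" "A \<subseteq> B" "\<And>ms. ms \<in> B - A \<Longrightarrow> f ms $ i = 0"
  shows "sum f B $ i = sum f A $ i"
proof -
  have "sum f B = sum f A + sum f (B - A)" using assms by (metis add.commute sum.subset_diff)
  moreover have "sum f (B - A) $ i = 0" using assms by (simp add: fps_sum_nth)
  ultimately show ?thesis by simp
qed

lemma zeta_q_nth:
  assumes "ks \<noteq> []" "hd ks \<ge> 2" "i \<le> M"
  shows "zeta_q ks $ i = Zs ks (Suc M) $ i"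
proof -
  define l where "l = length ks"
  define S where "S = Abs_fps (\<lambda>i. Zs ks (Suc i) $ i)"
  have key: "sum (zq_term ks) B $ i = Zs ks (Suc i) $ i"
    if B: "finite B" "Sset l (Suc i) \<subseteq> B" "B \<subseteq> zq_dom l" for B i
  proof -
    have "sum (zq_term ks) B $ i = sum (zq_term ks) (Sset l (Suc i)) $ i"
    proof (rule sum_nth_eq[OF B(1,2)])
      fix ms assume "ms \<in> B - Sset l (Suc i)"
      then obtain n rest where "ms = n # rest" "n \<ge> Suc i"
        using dom_not_Sset_head[of ms l "Suc i"] B(3) by blast
      then show "zq_term ks ms $ i = 0" using zq_term_nth0 assms by auto
    qed
    also have "\<dots> = Zs ks (Suc i) $ i" using Sset_sum[of ks] by (simp add: l_def)
    finally show ?thesis .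
  qed
  have "(zq_term ks has_sum S) (zq_dom l)"
    unfolding has_sum_def
  proof (rule tendsto_fpsI)
    fix i
    show "\<forall>\<^sub>F B in finite_subsets_at_top (zq_dom l). sum (zq_term ks) B $ i = S $ i"
      unfolding eventually_finite_subsets_at_top
    proof (intro exI[of _ "Sset l (Suc i)"] conjI allI impI)
      fix Y assume Y: "finite Y \<and> Sset l (Suc i) \<subseteq> Y \<and> Y \<subseteq> zq_dom l"
      then show "sum (zq_term ks) Y $ i = S $ i" using key[of Y i] by (simp add: S_def)
    qed (simp_all add: Sset_finite Sset_dom)
  qed
  then have "zeta_q ks = S" unfolding zeta_q_def l_def by (rule infsumI)
  then have "zeta_q ks $ i = Zs ks (Suc i) $ i" by (simp add: S_def)
  also have "\<dots> = Zs ks (Suc M) $ i"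
  proof -
    have sub: "Sset l (Suc i) \<subseteq> Sset l (Suc M)" using assms(3) by (auto simp: Sset_def)
    have "Zs ks (Suc M) $ i = sum (zq_term ks) (Sset l (Suc M)) $ i" using Sset_sum[of ks "Suc M"] by (simp add: l_def)
    also have "\<dots> = Zs ks (Suc i) $ i" by (rule key[OF Sset_finite sub Sset_dom])
    finally show ?thesis by simp
  qed
  finally show ?thesis .
qed

lemma X_pow_dvd: "(\<And>i. i < N \<Longrightarrow> f $ i = 0) \<Longrightarrow> fps_X ^ N dvd (f :: rat fps)"
proof -
  assume h: "\<And>i. i < N \<Longrightarrow> f $ i = 0"
  have "f = fps_X ^ N * fps_shift N f"
    by (rule fps_ext) (auto simp: fps_X_power_mult_nth h)
  then show ?thesis by (metis dvd_triv_left)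
qed

lemma zeta_q_trunc:
  assumes "ks \<noteq> []" "hd ks \<ge> 2"
  shows "fps_X ^ Suc M dvd (zeta_q ks - Zs ks (Suc M))"
  by (rule X_pow_dvd) (use zeta_q_nth[OF assms] in auto)





lemma merge_len: "length (merge c ks os) \<le> Suc (length ks)"
  by (induction c ks os rule: merge.induct) auto

lemma merge_sum: "sum_list (merge c ks os) \<le> c + sum_list ks"
  by (induction c ks os rule: merge.induct) auto

lemma merge_hd: "\<forall>k\<in>set ks. k \<ge> 1 \<Longrightarrow> merge c ks os \<noteq> [] \<and> hd (merge c ks os) \<ge> c"
  by (induction c ks os rule: merge.induct) force+

lemma box_UNIV: "(UNIV :: box set) = {Comma, Plus, MinusPlus}"
  using box.exhaust by auto

lemma finite_os: "finite {os :: box list. length os = l}"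
proof -
  have "{os :: box list. length os = l} = {os. set os \<subseteq> UNIV \<and> length os = l}" by auto
  then show ?thesis using finite_lists_length_eq[of "UNIV :: box set" l] by (simp add: box_UNIV)
qed

lemma sum_os_Suc:
  "(\<Sum>os\<in>{os. length os = Suc l}. g os) = (\<Sum>os\<in>{os. length os = l}. g (Comma # os) + g (Plus # os) + g (MinusPlus # os))"
proof -
  have e: "{os. length os = Suc l} = (\<lambda>(b, os). b # os) ` (UNIV \<times> {os. length os = l})"
    by (auto simp: length_Suc_conv image_iff)
  have "(\<Sum>os\<in>{os. length os = Suc l}. g os) = (\<Sum>(b, os)\<in>UNIV \<times> {os. length os = l}. g (b # os))"
    unfolding e by (subst sum.reindex) (auto simp: inj_on_def split_def)
  also have "\<dots> = (\<Sum>b\<in>UNIV. \<Sum>os\<in>{os. length os = l}. g (b # os))"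
    by (rule sum.cartesian_product[symmetric])
  also have "\<dots> = (\<Sum>os\<in>{os. length os = l}. g (Comma # os) + g (Plus # os) + g (MinusPlus # os))"
    by (simp add: box_UNIV sum.distrib add.assoc)
  finally show ?thesis .
qed

lemma ff_prod: "c \<ge> 1 \<Longrightarrow> k \<ge> 1 \<Longrightarrow> ff c n * ff k n = ff (c + k) n + hh * ff (c + k - 1) n"
proof (cases "n = 0")
  case False
  assume ck: "c \<ge> 1" "k \<ge> 1"
  have "ff c n * ff k n = aa n * ff (c + k - 1) n" using ck False
    by (simp add: ff_eq power_add[symmetric] algebra_simps)
  also have "\<dots> = ff (c + k) n + hh * ff (c + k - 1) n" using aa_ff[of "c + k - 1" n] ck by simp
  finally show ?thesis .
qed (simp add: ff_0)

lemma cF_prod: "c \<ge> 1 \<Longrightarrow> k \<ge> 1 \<Longrightarrow> cF c n * cF k n = cF (c + k) n + cH * cF (c + k - 1) n"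
proof -
  assume ck: "c \<ge> 1" "k \<ge> 1"
  have "cF c n * cF k n = [:ff c n * ff k n:]" by (simp only: cF_def pc_mult)
  also have "\<dots> = [:ff (c + k) n + hh * ff (c + k - 1) n:]" by (simp only: ff_prod[OF ck])
  also have "\<dots> = cF (c + k) n + cH * cF (c + k - 1) n" by (simp only: cF_def cH_def pc_mult pc_add)
  finally show ?thesis .
qed

definition mterm :: "nat \<Rightarrow> nat list \<Rightarrow> nat \<Rightarrow> box list \<Rightarrow> R" where
  "mterm c ks m os = [:(1 - fps_X) ^ (c + sum_list ks - sum_list (merge c ks os)) * Zs (merge c ks os) m:]
      * tvar ^ (Suc (length ks) - length (merge c ks os))"

lemma merge_comb:
  "c \<ge> 1 \<Longrightarrow> \<forall>k\<in>set ks. k \<ge> 1 \<Longrightarrow>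
   (\<Sum>os\<in>{os. length os = length ks}. mterm c ks m os) = (\<Sum>n\<in>{1..<m}. cF c n * Vv ks n)"
proof (induction ks arbitrary: c m)
  case Nil
  have "{os :: box list. length os = 0} = {[]}" by auto
  then show ?case by (simp add: mterm_def cF_def pc_sum)
next
  case (Cons k ks)
  have k: "k \<ge> 1" and ks: "\<forall>k\<in>set ks. k \<ge> 1" using Cons.prems by auto
  have c: "c \<ge> 1" by fact
  let ?S = "{os :: box list. length os = length ks}"
  have comma: "mterm c (k # ks) m (Comma # os) = (\<Sum>n\<in>{1..<m}. cF c n * mterm k ks n os)" for os
    by (simp add: mterm_def cF_def pc_sum[symmetric] sum_distrib_left sum_distrib_right algebra_simps)
  have plus: "mterm c (k # ks) m (Plus # os) = tvar * mterm (c + k) ks m os" for os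
  proof -
    have "length (merge (c + k) ks os) \<le> Suc (length ks)" by (rule merge_len)
    then have "Suc (Suc (length ks)) - length (merge (c + k) ks os) = Suc (Suc (length ks) - length (merge (c + k) ks os))" by simp
    then show ?thesis by (simp add: mterm_def add.assoc algebra_simps)
  qed
  have mplus: "mterm c (k # ks) m (MinusPlus # os) = tvar * cH * mterm (c - 1 + k) ks m os" for os
  proof -
    have "length (merge (c - 1 + k) ks os) \<le> Suc (length ks)" by (rule merge_len)
    then have e1: "Suc (Suc (length ks)) - length (merge (c - 1 + k) ks os) = Suc (Suc (length ks) - length (merge (c - 1 + k) ks os))" by simp
    define P where "P = merge (c - 1 + k) ks os"
    define e where "e = c - 1 + k + sum_list ks - sum_list P"
    define d where "d = Suc (length ks) - length P"
    have "sum_list P \<le> c - 1 + k + sum_list ks" unfolding P_def by (rule merge_sum)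
    then have e2: "c + sum_list (k # ks) - sum_list P = Suc e"
      using c by (simp add: e_def)
    have e1': "Suc (length (k # ks)) - length P = Suc d" using e1 by (simp add: P_def d_def)
    have "mterm c (k # ks) m (MinusPlus # os) = [:(1 - fps_X) ^ Suc e * Zs P m:] * tvar ^ Suc d"
      unfolding mterm_def merge.simps P_def[symmetric] e2 e1' ..
    also have "\<dots> = tvar * cH * ([:(1 - fps_X) ^ e * Zs P m:] * tvar ^ d)"
    proof -
      have "[:(1 - fps_X) ^ Suc e * Zs P m:] = cH * [:(1 - fps_X) ^ e * Zs P m:]"
        by (simp only: cH_def hh_def pc_mult power_Suc mult.assoc)
      then show ?thesis by (simp add: ac_simps)
    qed
    also have "[:(1 - fps_X) ^ e * Zs P m:] * tvar ^ d = mterm (c - 1 + k) ks m os"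
      by (simp add: mterm_def P_def e_def d_def)
    finally show ?thesis .
  qed
  have "(\<Sum>os\<in>{os. length os = length (k # ks)}. mterm c (k # ks) m os)
      = (\<Sum>os\<in>?S. mterm c (k # ks) m (Comma # os)) + (\<Sum>os\<in>?S. mterm c (k # ks) m (Plus # os))
        + (\<Sum>os\<in>?S. mterm c (k # ks) m (MinusPlus # os))"
    unfolding length_Cons sum_os_Suc by (simp add: sum.distrib)
  also have "(\<Sum>os\<in>?S. mterm c (k # ks) m (Comma # os)) = (\<Sum>n\<in>{1..<m}. cF c n * (\<Sum>p\<in>{1..<n}. cF k p * Vv ks p))"
    unfolding comma by (subst sum.swap) (simp add: sum_distrib_left[symmetric] Cons.IH[OF k ks])
  also have "(\<Sum>os\<in>?S. mterm c (k # ks) m (Plus # os)) = tvar * (\<Sum>n\<in>{1..<m}. cF (c + k) n * Vv ks n)"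
    unfolding plus using c by (simp add: sum_distrib_left[symmetric] Cons.IH[OF _ ks])
  also have "(\<Sum>os\<in>?S. mterm c (k # ks) m (MinusPlus # os)) = tvar * cH * (\<Sum>n\<in>{1..<m}. cF (c - 1 + k) n * Vv ks n)"
    unfolding mplus using c k by (simp add: sum_distrib_left[symmetric] Cons.IH[OF _ ks])
  also have "(\<Sum>n\<in>{1..<m}. cF c n * (\<Sum>p\<in>{1..<n}. cF k p * Vv ks p)) + tvar * (\<Sum>n\<in>{1..<m}. cF (c + k) n * Vv ks n)
       + tvar * cH * (\<Sum>n\<in>{1..<m}. cF (c - 1 + k) n * Vv ks n)
     = (\<Sum>n\<in>{1..<m}. cF c n * Vv (k # ks) n)"
  proof -
    have h: "cF c n * (cF k n * Vv ks n) = (cF (c + k) n + cH * cF (c - 1 + k) n) * Vv ks n" for n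
    proof -
      have "c + k - 1 = c - 1 + k" using c by simp
      then show ?thesis using cF_prod[OF c k, of n] by (metis mult.assoc)
    qed
    have "cF c n * Vv (k # ks) n = cF c n * (\<Sum>p\<in>{1..<n}. cF k p * Vv ks p) + tvar * (cF c n * (cF k n * Vv ks n))" for n
      by (simp add: Wop_def Lop_def algebra_simps)
    then have "cF c n * Vv (k # ks) n = cF c n * (\<Sum>p\<in>{1..<n}. cF k p * Vv ks p) + tvar * cF (c + k) n * Vv ks n + tvar * cH * cF (c - 1 + k) n * Vv ks n" for n
      unfolding h by (simp add: algebra_simps)
    then show ?thesis by (simp add: sum.distrib sum_distrib_left algebra_simps)
  qed
  finally show ?case .
qed

definition Tm :: "nat \<Rightarrow> nat list \<Rightarrow> R" where "Tm M ks = (\<Sum>n\<in>{1..M}. Uv ks n)"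

lemma pc_dvd: "fps_X ^ N dvd (b :: rat fps) \<Longrightarrow> [:fps_X ^ N:] dvd [:a * b:]"
proof -
  assume "fps_X ^ N dvd b"
  then obtain q where "b = fps_X ^ N * q" by (auto elim: dvdE)
  then have "[:a * b:] = [:fps_X ^ N:] * [:a * q:]" by (simp add: algebra_simps)
  then show ?thesis by (rule dvdI)
qed

lemma pc_diff_mult: "[:a * x:] * T - [:a * y:] * T = [:a * (x - y):] * (T :: 'a::comm_ring_1 poly)"
  by (simp only: left_diff_distrib[symmetric] pc_diff right_diff_distrib)

lemma FIN:
  assumes "ks \<noteq> []" "hd ks \<ge> 2" "\<forall>k\<in>set ks. k \<ge> 1"
  shows "[:fps_X ^ Suc M:] dvd (zeta_qt ks - Tm M ks)"
proof -
  obtain c ks' where ksd: "ks = c # ks'" using assms by (cases ks) auto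
  have c: "c \<ge> 2" and ks': "\<forall>k\<in>set ks'. k \<ge> 1" using assms ksd by auto
  let ?S = "{os :: box list. length os = length ks'}"
  let ?e = "\<lambda>os. c + sum_list ks' - sum_list (merge c ks' os)"
  let ?d = "\<lambda>os. Suc (length ks') - length (merge c ks' os)"
  have z: "zeta_qt ks = (\<Sum>os\<in>?S. [:(1 - fps_X) ^ ?e os * zeta_q (merge c ks' os):] * tvar ^ ?d os)"
    unfolding zeta_qt_def ksd by (simp add: Let_def)
  have t: "Tm M ks = (\<Sum>os\<in>?S. [:(1 - fps_X) ^ ?e os * Zs (merge c ks' os) (Suc M):] * tvar ^ ?d os)"
    using merge_comb[of c ks' "Suc M"] c ks'
    by (simp add: Tm_def ksd Uv_cons mterm_def atLeastLessThanSuc_atLeastAtMost)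
  have "zeta_qt ks - Tm M ks = (\<Sum>os\<in>?S. [:(1 - fps_X) ^ ?e os * (zeta_q (merge c ks' os) - Zs (merge c ks' os) (Suc M)):] * tvar ^ ?d os)"
    unfolding z t sum_subtractf[symmetric] pc_diff_mult ..
  also have "[:fps_X ^ Suc M:] dvd \<dots>"
  proof (rule dvd_sum, rule dvd_mult2, rule pc_dvd, rule zeta_q_trunc)
    fix os
    show "merge c ks' os \<noteq> []" using merge_hd[OF ks'] by blast
    show "2 \<le> hd (merge c ks' os)" using merge_hd[OF ks', of c os] c by linarith
  qed
  finally show ?thesis .
qed





lemma pc_dvd_pow: "N \<le> K \<Longrightarrow> [:fps_X ^ N:] dvd [:fps_X ^ K * (a :: rat fps):]"
proof -
  assume "N \<le> K"
  then have e: "fps_X ^ K * a = fps_X ^ N * (fps_X ^ (K - N) * a)"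
    by (simp add: mult.assoc[symmetric] power_add[symmetric])
  have "[:fps_X ^ K * a:] = [:fps_X ^ N:] * [:fps_X ^ (K - N) * a:]"
    unfolding pc_mult e ..
  then show ?thesis by (rule dvdI)
qed

lemma Dv_tail: "q \<le> M \<Longrightarrow> [:fps_X ^ Suc q:] dvd (Dv M - Dv q)"
proof (induction M)
  case 0 then show ?case by simp
next
  case (Suc M)
  show ?case
  proof (cases "q = Suc M")
    case False
    then have q: "q \<le> M" using Suc by simp
    have e: "Dv (Suc M) - Dv q = (Dv M - Dv q) + cX (Suc M)" by (simp add: Dv_Suc)
    have "[:fps_X ^ Suc q:] dvd cX (Suc M)"
      unfolding cX_def xx_def using q by (intro pc_dvd_pow) simp
    then show ?thesis unfolding e using Suc.IH[OF q] by (intro dvd_add)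
  qed simp
qed

lemma Uv_dvd:
  assumes "ks \<noteq> []" "hd ks \<ge> 2"
  shows "[:fps_X ^ p:] dvd Uv ks p"
proof -
  obtain c r where ks: "ks = c # r" using assms by (cases ks) auto
  have "c - 1 \<ge> 1" using assms ks by simp
  then have "p \<le> (c - 1) * p" by simp
  then have "[:fps_X ^ p:] dvd cF c p" unfolding cF_def ff_def by (rule pc_dvd_pow)
  then show ?thesis by (simp add: ks Uv_cons)
qed

lemma top_small:
  assumes "ks \<noteq> []" "hd ks \<ge> 2"
  shows "[:fps_X ^ Suc M:] dvd (\<Sum>n\<in>{1..M}. Xh (Uv ks) n - cX n * Lop (Uv ks) n - Dv n * Uv ks n)"
  unfolding top_error dvd_minus_iff
proof (rule dvd_sum)
  fix p assume p: "p \<in> {1..M}"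
  have "[:fps_X ^ p:] * [:fps_X ^ Suc (M - p):] dvd Uv ks p * (Dv M - Dv (M - p))"
    by (rule mult_dvd_mono[OF Uv_dvd[OF assms] Dv_tail]) simp
  moreover have "fps_X ^ p * fps_X ^ Suc (M - p) = (fps_X ^ Suc M :: rat fps)"
    using p by (simp flip: power_add)
  then have "[:fps_X ^ p:] * [:fps_X ^ Suc (M - p):] = ([:fps_X ^ Suc M:] :: R)"
    by (simp only: pc_mult)
  ultimately show "[:fps_X ^ Suc M:] dvd Uv ks p * (Dv M - Dv (M - p))" by (simp only:)
qed

definition PhiL :: "nat list \<Rightarrow> (nat list \<Rightarrow> R) \<Rightarrow> R" where
  "PhiL ks Z = (\<Sum>i<length ks. \<Sum>j<ks ! i - 1. Z (ins ks i j))"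
definition PhiR :: "nat list \<Rightarrow> (nat list \<Rightarrow> R) \<Rightarrow> R" where
  "PhiR ks Z = (\<Sum>i<length ks. (1 + of_int (int (ks ! i) - 2 + (if i = length ks - 1 then 1 else 0)) * tvar) * Z (bump ks i))
     + tvar * (tvar - 1) * (\<Sum>i<length ks - 1. Z (mg ks 1 i))
     + [:1 - fps_X:] * ((\<Sum>i<length ks. tvar * of_nat (ks ! i - 1) * Z ks)
        + tvar * (tvar - 1) * (\<Sum>i<length ks - 1. Z (mg ks 0 i)))"

lemma PhiL_diff: "PhiL ks (\<lambda>L. f L - g L) = PhiL ks f - PhiL ks g"
  by (simp add: PhiL_def sum_subtractf)
lemma lin8: "(S1 - S2) + T * (S3 - S4) + H * ((S5 - S6) + T * (S7 - S8))
   = (S1 + T * S3 + H * (S5 + T * S7)) - (S2 + T * S4 + H * (S6 + T * S8 :: 'a::comm_ring_1))"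
  by (simp add: algebra_simps)

lemma sum_cdiff: "(\<Sum>i\<in>I. c i * (f i - g i)) = (\<Sum>i\<in>I. c i * f i) - (\<Sum>i\<in>I. c i * (g i :: 'a::comm_ring_1))"
  by (simp add: right_diff_distrib sum_subtractf)

lemma PhiR_diff: "PhiR ks (\<lambda>L. f L - g L) = PhiR ks f - PhiR ks g"
  unfolding PhiR_def sum_cdiff sum_subtractf by (rule lin8)

definition good :: "nat list \<Rightarrow> bool" where
  "good L \<longleftrightarrow> L \<noteq> [] \<and> hd L \<ge> 2 \<and> (\<forall>k\<in>set L. k \<ge> 1)"

lemma good_ins:
  assumes "good ks" "i < length ks" "j < ks ! i - 1"
  shows "good (ins ks i j)"
proof -
  have "ks ! i \<in> set ks" using assms by simp
  have "\<forall>k\<in>set (ins ks i j). k \<ge> 1"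
    using assms set_take_subset[of i ks] set_drop_subset[of "Suc i" ks] unfolding good_def ins_def by auto
  moreover have "hd (ins ks i j) \<ge> 2"
    using assms unfolding good_def ins_def by (cases i) (auto simp: hd_conv_nth nth_append)
  ultimately show ?thesis by (simp add: good_def ins_def)
qed

lemma good_bump:
  assumes "good ks" "i < length ks"
  shows "good (bump ks i)"
proof -
  have "\<forall>k\<in>set (bump ks i). k \<ge> 1"
    using assms set_update_subset_insert[of ks i "Suc (ks ! i)"] unfolding good_def bump_def by auto
  moreover have "hd (bump ks i) \<ge> 2"
    using assms unfolding good_def bump_def by (cases i) (auto simp: hd_conv_nth)
  ultimately show ?thesis using assms by (simp add: good_def bump_def)
qed

lemma good_mg:
  assumes "good ks" "i < length ks - 1"
  shows "good (mg ks e i)"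
proof -
  have sk: "\<forall>k\<in>set ks. k \<ge> 1" using assms by (simp add: good_def)
  have ki: "ks ! i \<ge> 1" using sk assms by simp
  have "\<forall>k\<in>set (mg ks e i). k \<ge> 1"
  proof
    fix k assume "k \<in> set (mg ks e i)"
    then have "k \<in> set (take i ks) \<or> k = ks ! i + ks ! Suc i + e \<or> k \<in> set (drop (Suc (Suc i)) ks)"
      by (simp add: mg_def) blast
    then show "k \<ge> 1"
    proof (elim disjE)
      assume "k \<in> set (take i ks)" then show ?thesis using sk set_take_subset[of i ks] by blast
    next
      assume "k = ks ! i + ks ! Suc i + e" then show ?thesis using ki by simp
    next
      assume "k \<in> set (drop (Suc (Suc i)) ks)" then show ?thesis using sk set_drop_subset[of "Suc (Suc i)" ks] by blast
    qed
  qed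
  moreover have "hd (mg ks e i) \<ge> 2"
    using assms unfolding good_def mg_def by (cases i) (auto simp: hd_conv_nth nth_append)
  ultimately show ?thesis by (simp add: good_def mg_def)
qed

lemma Phi_small:
  assumes "good ks" "\<And>L. good L \<Longrightarrow> [:fps_X ^ N:] dvd Z L"
  shows "[:fps_X ^ N:] dvd PhiL ks Z" "[:fps_X ^ N:] dvd PhiR ks Z"
proof -
  show "[:fps_X ^ N:] dvd PhiL ks Z"
    unfolding PhiL_def by (intro dvd_sum) (simp add: assms good_ins)
  show "[:fps_X ^ N:] dvd PhiR ks Z"
    unfolding PhiR_def
    by (intro dvd_add dvd_mult dvd_sum) (simp_all add: assms good_bump good_mg)
qed

lemma coef:
  "k \<ge> 1 \<Longrightarrow> (1 + of_int (int k - 2 + (if b then 1 else 0)) * tvar :: R) = tvar * of_nat (k - 1) + (1 - tvar + (if b then tvar else 0))"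
proof -
  assume k: "k \<ge> 1"
  then obtain k' where k': "k = Suc k'" by (cases k) auto
  have e: "int k - 2 + (if b then 1 else 0) = int k' - 1 + (if b then 1 else 0)" using k' by simp
  show ?thesis
  proof (cases b)
    case True
    have "(of_int (int k - 2 + (if b then 1 else 0)) :: R) = of_nat k'" unfolding e using True by simp
    then show ?thesis using True k' by (simp add: algebra_simps)
  next
    case False
    have "(of_int (int k - 2 + (if b then 1 else 0)) :: R) = of_nat k' - 1" unfolding e using False by simp
    then show ?thesis using False k' by (simp add: algebra_simps)
  qed
qed

lemma PhiL_Tm: "PhiL ks (Tm M) = (\<Sum>n\<in>{1..M}. UD ks n)"
proof -
  have "PhiL ks (Tm M) = (\<Sum>i<length ks. \<Sum>n\<in>{1..M}. \<Sum>j<ks ! i - 1. Uv (ins ks i j) n)"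
    unfolding PhiL_def Tm_def by (rule sum.cong[OF refl]) (rule sum.swap)
  also have "\<dots> = (\<Sum>n\<in>{1..M}. UD ks n)"
    unfolding UD_def by (rule sum.swap)
  finally show ?thesis .
qed

lemma PhiR_Tm:
  assumes "\<forall>k\<in>set ks. k \<ge> 1"
  shows "PhiR ks (Tm M) = (\<Sum>n\<in>{1..M}. UR ks n)"
proof -
  have b: "(\<Sum>n\<in>{1..M}. URb ks i n) = tvar * of_nat (ks ! i - 1) * (Tm M (bump ks i) + cH * Tm M ks)
         + (1 - tvar + (if i = length ks - 1 then tvar else 0)) * Tm M (bump ks i)" for i
    by (simp add: URb_def Tm_def sum.distrib sum_distrib_left distrib_left mult.assoc)
  have m: "(\<Sum>n\<in>{1..M}. URm ks i n) = Tm M (mg ks 1 i) + cH * Tm M (mg ks 0 i)" for i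
    by (simp add: URm_def Tm_def sum.distrib sum_distrib_left)
  have "(\<Sum>n\<in>{1..M}. UR ks n) = (\<Sum>i<length ks. \<Sum>n\<in>{1..M}. URb ks i n) + tvar * (tvar - 1) * (\<Sum>i<length ks - 1. \<Sum>n\<in>{1..M}. URm ks i n)"
  proof -
    have "(\<Sum>n\<in>{1..M}. UR ks n) = (\<Sum>n\<in>{1..M}. \<Sum>i<length ks. URb ks i n) + tvar * (tvar - 1) * (\<Sum>n\<in>{1..M}. \<Sum>i<length ks - 1. URm ks i n)"
      unfolding UR_def by (simp add: sum.distrib sum_distrib_left)
    then show ?thesis by (simp only: sum.swap[of _ "{1..M}"])
  qed
  also have "\<dots> = (\<Sum>i<length ks. tvar * of_nat (ks ! i - 1) * (Tm M (bump ks i) + cH * Tm M ks)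
         + (1 - tvar + (if i = length ks - 1 then tvar else 0)) * Tm M (bump ks i))
       + tvar * (tvar - 1) * (\<Sum>i<length ks - 1. Tm M (mg ks 1 i) + cH * Tm M (mg ks 0 i))"
    by (simp only: b m)
  also have "\<dots> = PhiR ks (Tm M)"
  proof -
    have c: "(\<Sum>i<length ks. (1 + of_int (int (ks ! i) - 2 + (if i = length ks - 1 then 1 else 0)) * tvar) * Tm M (bump ks i))
        = (\<Sum>i<length ks. (tvar * of_nat (ks ! i - 1) + (1 - tvar + (if i = length ks - 1 then tvar else 0))) * Tm M (bump ks i))"
    proof (rule sum.cong[OF refl])
      fix i assume "i \<in> {..<length ks}"
      then have "ks ! i \<ge> 1" using assms by auto
      then show "(1 + of_int (int (ks ! i) - 2 + (if i = length ks - 1 then 1 else 0)) * tvar) * Tm M (bump ks i)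
          = (tvar * of_nat (ks ! i - 1) + (1 - tvar + (if i = length ks - 1 then tvar else 0))) * Tm M (bump ks i)"
        by (simp only: coef)
    qed
    have s1: "(\<Sum>i<length ks. tvar * of_nat (ks ! i - 1) * (Tm M (bump ks i) + cH * Tm M ks)
         + (1 - tvar + (if i = length ks - 1 then tvar else 0)) * Tm M (bump ks i))
       = (\<Sum>i<length ks. (tvar * of_nat (ks ! i - 1) + (1 - tvar + (if i = length ks - 1 then tvar else 0))) * Tm M (bump ks i))
         + cH * (\<Sum>i<length ks. tvar * of_nat (ks ! i - 1) * Tm M ks)"
    proof -
      have per: "\<And>i. tvar * of_nat (ks ! i - 1) * (Tm M (bump ks i) + cH * Tm M ks)
         + (1 - tvar + (if i = length ks - 1 then tvar else 0)) * Tm M (bump ks i)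
         = (tvar * of_nat (ks ! i - 1) + (1 - tvar + (if i = length ks - 1 then tvar else 0))) * Tm M (bump ks i)
         + cH * (tvar * of_nat (ks ! i - 1) * Tm M ks)"
        by (simp add: algebra_simps)
      show ?thesis unfolding per sum.distrib sum_distrib_left ..
    qed
    have s2: "(\<Sum>i<length ks - 1. Tm M (mg ks 1 i) + cH * Tm M (mg ks 0 i))
       = (\<Sum>i<length ks - 1. Tm M (mg ks 1 i)) + cH * (\<Sum>i<length ks - 1. Tm M (mg ks 0 i))"
      by (simp add: sum.distrib sum_distrib_left)
    have lin: "\<And>A B C D H T :: R. A + H * B + T * (C + H * D) = A + T * C + H * (B + T * D)"
      by (simp add: algebra_simps)
    show ?thesis unfolding PhiR_def c s1 s2 cH_def[symmetric] hh_def[symmetric]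
      by (rule lin)
  qed
  finally show ?thesis by simp
qed

lemma all_small_zero:
  assumes "\<And>M. [:fps_X ^ Suc M:] dvd (P :: R)"
  shows "P = 0"
proof (rule poly_eqI)
  fix e
  show "coeff P e = coeff 0 e"
  proof (rule fps_ext)
    fix i
    obtain Q where Q: "P = [:fps_X ^ Suc i:] * Q" using assms[of i] by (auto elim: dvdE)
    have "coeff P e = fps_X ^ Suc i * coeff Q e" unfolding Q by simp
    then have "coeff P e $ i = (fps_X ^ Suc i * coeff Q e) $ i" by simp
    also have "\<dots> = 0" by (simp only: fps_X_power_mult_nth) simp
    finally show "coeff P e $ i = coeff 0 e $ i" by simp
  qed
qed

lemma main_Phi:
  assumes "good ks"
  shows "PhiL ks zeta_qt = PhiR ks zeta_qt"
proof -
  have ks: "ks \<noteq> []" "hd ks \<ge> 2" "\<forall>k\<in>set ks. k \<ge> 1" using assms by (auto simp: good_def)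
  have "PhiL ks zeta_qt - PhiR ks zeta_qt = 0"
  proof (rule all_small_zero)
    fix M
    let ?Zd = "\<lambda>L. zeta_qt L - Tm M L"
    have d: "PhiL ks zeta_qt - PhiR ks zeta_qt = (PhiL ks ?Zd - PhiR ks ?Zd) + (PhiL ks (Tm M) - PhiR ks (Tm M))"
      by (simp add: PhiL_diff PhiR_diff)
    have s: "\<And>L. good L \<Longrightarrow> [:fps_X ^ Suc M:] dvd ?Zd L" using FIN by (auto simp: good_def)
    have t: "PhiL ks (Tm M) - PhiR ks (Tm M) = (\<Sum>n\<in>{1..M}. Xh (Uv ks) n - cX n * Lop (Uv ks) n - Dv n * Uv ks n)"
      unfolding PhiL_Tm PhiR_Tm[OF ks(3)] sum_subtractf[symmetric] using main_op[OF ks(1,3)]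
      by (intro sum.cong refl) (simp add: algebra_simps)
    show "[:fps_X ^ Suc M:] dvd PhiL ks zeta_qt - PhiR ks zeta_qt"
      unfolding d t
      by (intro dvd_add dvd_diff Phi_small[OF assms s] top_small[OF ks(1,2)])
  qed
  then show ?thesis by simp
qed


theorem theorem4p1:
  fixes ks :: "nat list"
  assumes "ks \<noteq> []" and "\<forall>k\<in>set ks. 1 \<le> k" and "2 \<le> ks ! 0"
  shows "(\<Sum>i<length ks. \<Sum>j<ks!i - 1.
            zeta_qt (take i ks @ [ks!i - j, j + 1] @ drop (i + 1) ks))
       = (\<Sum>i<length ks.
            (1 + of_int (int (ks!i) - 2 + (if i = length ks - 1 then 1 else 0)) * tvar)
              * zeta_qt (ks[i := ks!i + 1]))
         + tvar * (tvar - 1) * (\<Sum>i<length ks - 1.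
              zeta_qt (take i ks @ [ks!i + ks!(i+1) + 1] @ drop (i + 2) ks))
         + [: 1 - fps_X :] *
             ((\<Sum>i<length ks. tvar * of_nat (ks!i - 1) * zeta_qt ks)
              + tvar * (tvar - 1) * (\<Sum>i<length ks - 1.
                   zeta_qt (take i ks @ [ks!i + ks!(i+1)] @ drop (i + 2) ks)))"
proof -
  have g: "good ks" using assms by (simp add: good_def hd_conv_nth)
  have e1: "\<And>i j. take i ks @ [ks!i - j, j + 1] @ drop (i + 1) ks = ins ks i j" by (simp add: ins_def)
  have e2: "\<And>i. ks[i := ks!i + 1] = bump ks i" by (simp add: bump_def)
  have e3: "\<And>i. take i ks @ [ks!i + ks!(i+1) + 1] @ drop (i + 2) ks = mg ks 1 i"
    by (simp add: mg_def numeral_2_eq_2)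
  have e4: "\<And>i. take i ks @ [ks!i + ks!(i+1)] @ drop (i + 2) ks = mg ks 0 i"
    by (simp add: mg_def numeral_2_eq_2)
  show ?thesis unfolding e1 e2 e3 e4 using main_Phi[OF g] unfolding PhiL_def PhiR_def .
qed

end
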